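(* Let $G$ be a graph with a good partition $(X,\mathcal{B})$ and let $P=(x_1,\dots,x_t)$ be a good permutation of $(X,\mathcal{B})$. Then for every $i\in[t]$ we have $\mathcal{A}^P_i\sqsubseteq\mathcal{B}$, and the graph $G[X\cup\mathsf{notmin}(x_i,\{x_i,\dots,x_t\},\mathcal{A}^P_{i-1})]$ is an $X$-interval graph.
   Context: Partitions are into nonempty blocks; $\mathcal{A}\sqsubseteq\mathcal{B}$ means every block of $\mathcal{A}$ is contained in a block of $\mathcal{B}$. $\mathsf{CC}(H)$ is the partition of $V(H)$ into vertex sets of connected components. For a maximal clique $X$ of a chordal graph $H$, $H$ is an $X$-interval graph if there is an ordering $(K_1,\dots,K_k,X)$ of all maximal cliques of $H$ ending with $X$ such that for each vertex the cliques containing it are consecutive. For $X\subseteq V(G)$, $Y\subseteq X$, a partition $\mathcal{B}$ of $V(G)\setminus X$, a block $B$ and $x\in Y$: $N(x)$ is minimal in $B$ for $Y$ if $N(x)\cap B\subseteq N(y)$ for all $y\in Y$; $x$ is removable from $Y$ for $\mathcal{B}$ if $N(x)$ is minimal for $Y$ in at least $|\mathcal{B}|-1$ blocks. A good partition of $G$ is a pair $(X,\mathcal{B})$, $X$ a maximal clique, $\mathcal{B}$ a partition of $V(G)\setminus X$, with (i) $\mathsf{CC}(G-X)\sqsubseteq\mathcal{B}$; (ii) $G[X\cup B]$ is an $X$-interval graph for all $B\in\mathcal{B}$; (iii) there is an ordering $(x_1,\dots,x_t)$ of $X$, called a good permutation of $(X,\mathcal{B})$, with each $x_i$ removable from $\{x_i,\dots,x_t\}$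 for $\mathcal{B}$. For $W\subseteq X$, $x\in W$ and a partition $\mathcal{A}$ of $V(G)\setminus X$, $\mathsf{notmin}(x,W,\mathcal{A})$ is the union of the blocks $A\in\mathcal{A}$ in which $N(x)$ is not minimal for $W$. For an ordering $P=(x_1,\dots,x_\ell)$ of a subset of $X$: $\mathcal{A}^P_0=\mathsf{CC}(G-X)$, and for $i\in[\ell]$, $\mathcal{A}^P_i$ is obtained from $\mathcal{A}^P_{i-1}$ by replacing the blocks contained in $\mathsf{notmin}(x_i,X\setminus\{x_1,\dots,x_{i-1}\},\mathcal{A}^P_{i-1})$ by their union (nothing changes if there are none). *)

theory Defs
  imports Main
begin

text \<open>Induced subgraphs G[S] are represented by the
vertex set S together with the same relation E (all notions below are relativised
to the given vertex set).\<close>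

definition simple_graph :: "'a set \<Rightarrow> ('a \<Rightarrow> 'a \<Rightarrow> bool) \<Rightarrow> bool" where
  "simple_graph V E \<longleftrightarrow> finite V \<and> (\<forall>x y. E x y \<longrightarrow> E y x) \<and> (\<forall>x. \<not> E x x)"

definition nbhd :: "'a set \<Rightarrow> ('a \<Rightarrow> 'a \<Rightarrow> bool) \<Rightarrow> 'a \<Rightarrow> 'a set" where
  "nbhd V E x = {y \<in> V. E x y}"

definition is_clique :: "'a set \<Rightarrow> ('a \<Rightarrow> 'a \<Rightarrow> bool) \<Rightarrow> 'a set \<Rightarrow> bool" where
  "is_clique V E K \<longleftrightarrow> K \<subseteq> V \<and> (\<forall>x\<in>K. \<forall>y\<in>K. x \<noteq> y \<longrightarrow> E x y)"

definition max_clique :: "'a set \<Rightarrow> ('a \<Rightarrow> 'a \<Rightarrow> bool) \<Rightarrow> 'a set \<Rightarrow> bool" where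
  "max_clique V E K \<longleftrightarrow> is_clique V E K \<and> (\<forall>K'. is_clique V E K' \<and> K \<subseteq> K' \<longrightarrow> K' = K)"

definition induced_cycle :: "'a set \<Rightarrow> ('a \<Rightarrow> 'a \<Rightarrow> bool) \<Rightarrow> 'a list \<Rightarrow> bool" where
  "induced_cycle V E cs \<longleftrightarrow> length cs \<ge> 4 \<and> distinct cs \<and> set cs \<subseteq> V \<and>
     (\<forall>i<length cs. \<forall>j<length cs. i \<noteq> j \<longrightarrow>
        (E (cs ! i) (cs ! j) \<longleftrightarrow> (j = Suc i mod length cs \<or> i = Suc j mod length cs)))"

definition chordal :: "'a set \<Rightarrow> ('a \<Rightarrow> 'a \<Rightarrow> bool) \<Rightarrow> bool" where
  "chordal V E \<longleftrightarrow> (\<nexists>cs. induced_cycle V E cs)"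

definition X_interval :: "'a set \<Rightarrow> ('a \<Rightarrow> 'a \<Rightarrow> bool) \<Rightarrow> 'a set \<Rightarrow> bool" where
  "X_interval V E X \<longleftrightarrow> chordal V E \<and> max_clique V E X \<and>
     (\<exists>Ks. distinct Ks \<and> set Ks = {K. max_clique V E K} \<and> Ks \<noteq> [] \<and> last Ks = X \<and>
        (\<forall>v\<in>V. \<forall>i j k. i \<le> j \<and> j \<le> k \<and> k < length Ks \<and> v \<in> Ks ! i \<and> v \<in> Ks ! k
              \<longrightarrow> v \<in> Ks ! j))"

definition is_partition :: "'a set set \<Rightarrow> 'a set \<Rightarrow> bool" where
  "is_partition \<P> S \<longleftrightarrow> \<Union>\<P> = S \<and> {} \<notin> \<P> \<and>
     (\<forall>A\<in>\<P>. \<forall>B\<in>\<P>. A \<noteq> B \<longrightarrow> A \<inter> B = {})"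

definition refines :: "'a set set \<Rightarrow> 'a set set \<Rightarrow> bool" (infix "\<sqsubseteq>" 50) where
  "\<A> \<sqsubseteq> \<B> \<longleftrightarrow> (\<forall>A\<in>\<A>. \<exists>B\<in>\<B>. A \<subseteq> B)"

definition reach :: "'a set \<Rightarrow> ('a \<Rightarrow> 'a \<Rightarrow> bool) \<Rightarrow> 'a \<Rightarrow> 'a \<Rightarrow> bool" where
  "reach V E = (\<lambda>u v. u \<in> V \<and> v \<in> V \<and> E u v)\<^sup>*\<^sup>*"

definition CC :: "'a set \<Rightarrow> ('a \<Rightarrow> 'a \<Rightarrow> bool) \<Rightarrow> 'a set set" where
  "CC V E = {{v \<in> V. reach V E u v} | u. u \<in> V}"

definition minimal_in :: "'a set \<Rightarrow> ('a \<Rightarrow> 'a \<Rightarrow> bool) \<Rightarrow> 'a \<Rightarrow> 'a set \<Rightarrow> 'a set \<Rightarrow> bool" where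
  "minimal_in V E x Y B \<longleftrightarrow> (\<forall>y\<in>Y. nbhd V E x \<inter> B \<subseteq> nbhd V E y)"

definition removable :: "'a set \<Rightarrow> ('a \<Rightarrow> 'a \<Rightarrow> bool) \<Rightarrow> 'a \<Rightarrow> 'a set \<Rightarrow> 'a set set \<Rightarrow> bool" where
  "removable V E x Y \<B> \<longleftrightarrow> card {B \<in> \<B>. minimal_in V E x Y B} \<ge> card \<B> - 1"

definition good_permutation :: "'a set \<Rightarrow> ('a \<Rightarrow> 'a \<Rightarrow> bool) \<Rightarrow> 'a set \<Rightarrow> 'a set set \<Rightarrow> 'a list \<Rightarrow> bool" where
  "good_permutation V E X \<B> P \<longleftrightarrow> distinct P \<and> set P = X \<and>
     (\<forall>i<length P. removable V E (P ! i) (set (drop i P)) \<B>)"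

definition good_partition :: "'a set \<Rightarrow> ('a \<Rightarrow> 'a \<Rightarrow> bool) \<Rightarrow> 'a set \<Rightarrow> 'a set set \<Rightarrow> bool" where
  "good_partition V E X \<B> \<longleftrightarrow> max_clique V E X \<and> is_partition \<B> (V - X) \<and>
     CC (V - X) E \<sqsubseteq> \<B> \<and>
     (\<forall>B\<in>\<B>. X_interval (X \<union> B) E X) \<and>
     (\<exists>P. good_permutation V E X \<B> P)"

definition notmin :: "'a set \<Rightarrow> ('a \<Rightarrow> 'a \<Rightarrow> bool) \<Rightarrow> 'a \<Rightarrow> 'a set \<Rightarrow> 'a set set \<Rightarrow> 'a set" where
  "notmin V E x W \<A> = \<Union>{A \<in> \<A>. \<not> minimal_in V E x W A}"

text \<open>Replace the blocks contained in M by their union (nothing changes if there are none).\<close>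
definition merge_blocks :: "'a set set \<Rightarrow> 'a set \<Rightarrow> 'a set set" where
  "merge_blocks \<A> M = (if {A \<in> \<A>. A \<subseteq> M} = {} then \<A>
      else (\<A> - {A \<in> \<A>. A \<subseteq> M}) \<union> {\<Union>{A \<in> \<A>. A \<subseteq> M}})"

text \<open>Aseq V E X P i = A^P_i (P is 0-indexed: x_i = P ! (i-1)).\<close>
primrec Aseq :: "'a set \<Rightarrow> ('a \<Rightarrow> 'a \<Rightarrow> bool) \<Rightarrow> 'a set \<Rightarrow> 'a list \<Rightarrow> nat \<Rightarrow> 'a set set" where
  "Aseq V E X P 0 = CC (V - X) E"
| "Aseq V E X P (Suc i) = merge_blocks (Aseq V E X P i)
      (notmin V E (P ! i) (X - set (take i P)) (Aseq V E X P i))"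

end

theory Submission
  imports Defs
begin

lemma filter_index:
  "\<exists>f. (\<forall>i<length (filter P xs). f i < length xs \<and> filter P xs ! i = xs ! f i) \<and>
       (\<forall>i j. i \<le> j \<longrightarrow> j < length (filter P xs) \<longrightarrow> f i \<le> f j)"
proof (induction xs)
  case Nil
  then show ?case by simp
next
  case (Cons x xs)
  then obtain f where f1: "\<And>i. i<length (filter P xs) \<Longrightarrow> f i < length xs \<and> filter P xs ! i = xs ! f i"
    and f2: "\<And>i j. i \<le> j \<Longrightarrow> j < length (filter P xs) \<Longrightarrow> f i \<le> f j" by blast
  show ?case
  proof (cases "P x")
    case True
    define g where "g = (\<lambda>i. case i of 0 \<Rightarrow> 0 | Suc i \<Rightarrow> Suc (f i))"
    have "g i < length (x#xs) \<and> filter P (x#xs) ! i = (x#xs) ! g i"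
      if "i<length (filter P (x#xs))" for i
    proof (cases i)
      case 0 then show ?thesis using True by (simp add: g_def)
    next
      case (Suc n)
      then have "n < length (filter P xs)" using that True by simp
      then show ?thesis using f1[of n] True Suc by (simp add: g_def)
    qed
    moreover have "g i \<le> g j" if ij: "i \<le> j" "j < length (filter P (x#xs))" for i j
    proof (cases i)
      case 0 then show ?thesis by (simp add: g_def)
    next
      case (Suc n)
      then obtain m where m: "j = Suc m" "n \<le> m" using ij Suc by (cases j) auto
      then have "m < length (filter P xs)" using ij True by simp
      then show ?thesis using f2[of n m] m Suc by (simp add: g_def)
    qed
    ultimately show ?thesis by blast
  next
    case False
    define g where "g = (\<lambda>i. Suc (f i))"
    have "g i < length (x#xs) \<and> filter P (x#xs) ! i = (x#xs) ! g i"
      if "i<length (filter P (x#xs))" for i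
      using f1[of i] that False by (simp add: g_def)
    moreover have "g i \<le> g j" if "i \<le> j" "j < length (filter P (x#xs))" for i j
      using f2[of i j] that False by (simp add: g_def)
    ultimately show ?thesis by blast
  qed
qed

lemma last_filter': "xs \<noteq> [] \<Longrightarrow> P (last xs) \<Longrightarrow> last (filter P xs) = last xs"
  by (metis append_butlast_last_id filter.simps filter_append last_snoc)

lemma X_interval_clique:
  assumes "is_clique V E X"
  shows "X_interval X E X"
proof -
  have cl: "is_clique X E X" using assms by (auto simp: is_clique_def)
  have ch: "chordal X E"
    unfolding chordal_def
  proof
    assume "\<exists>cs. induced_cycle X E cs"
    then obtain cs where c: "induced_cycle X E cs" by blast
    hence l: "length cs \<ge> 4" and d: "distinct cs" and s: "set cs \<subseteq> X" by (auto simp: induced_cycle_def)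
    have "cs ! 0 \<in> set cs" "cs ! 2 \<in> set cs" using l by (auto intro!: nth_mem)
    hence "cs ! 0 \<in> X" "cs ! 2 \<in> X" using s by auto
    moreover have "cs ! 0 \<noteq> cs ! 2" using d l by (subst nth_eq_iff_index_eq) auto
    ultimately have "E (cs ! 0) (cs ! 2)" using cl by (auto simp: is_clique_def)
    moreover have "\<not> (2 = Suc 0 mod length cs \<or> 0 = Suc 2 mod length cs)" using l by auto
    moreover have "E (cs ! 0) (cs ! 2) \<longleftrightarrow> (2 = Suc 0 mod length cs \<or> 0 = Suc 2 mod length cs)"
    proof -
      have H: "\<forall>i<length cs. \<forall>j<length cs. i \<noteq> j \<longrightarrow>
        (E (cs ! i) (cs ! j) \<longleftrightarrow> (j = Suc i mod length cs \<or> i = Suc j mod length cs))"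
        using c unfolding induced_cycle_def by blast
      have "0 < length cs" "2 < length cs" using l by auto
      then show ?thesis by (intro H[rule_format]) auto
    qed
    ultimately show False by blast
  qed
  have XX: "K' = X" if "is_clique X E K'" "X \<subseteq> K'" for K'
    using that unfolding is_clique_def by blast
  have mc: "max_clique X E X"
    unfolding max_clique_def
  proof (intro conjI allI impI cl)
    fix K' assume "is_clique X E K' \<and> X \<subseteq> K'"
    then show "K' = X" using XX by blast
  qed
  have "K = X" if "max_clique X E K" for K
  proof -
    have "is_clique X E K" and m: "\<forall>K'. is_clique X E K' \<and> K \<subseteq> K' \<longrightarrow> K' = K"
      using that unfolding max_clique_def by (rule conjunct1, rule conjunct2)
    then have "K \<subseteq> X" unfolding is_clique_def by blast
    then show ?thesis using m cl by blast
  qed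
  then have se: "{K. max_clique X E K} = {X}" using mc by blast
  have "\<exists>Ks. distinct Ks \<and> set Ks = {K. max_clique X E K} \<and> Ks \<noteq> [] \<and> last Ks = X \<and>
        (\<forall>v\<in>X. \<forall>i j k. i \<le> j \<and> j \<le> k \<and> k < length Ks \<and> v \<in> Ks ! i \<and> v \<in> Ks ! k
              \<longrightarrow> v \<in> Ks ! j)"
    by (rule exI[of _ "[X]"]) (simp add: se)
  then show ?thesis unfolding X_interval_def using ch mc by blast
qed

lemma clique_mono: "is_clique V E K \<Longrightarrow> V \<subseteq> V' \<Longrightarrow> is_clique V' E K"
  unfolding is_clique_def by blast

lemma clique_sub: "is_clique V E K \<Longrightarrow> K \<subseteq> V' \<Longrightarrow> is_clique V' E K"
  unfolding is_clique_def by blast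

lemma X_interval_restrict:
  assumes xi: "X_interval (X \<union> B) E X" and CB: "C \<subseteq> B"
    and cl: "\<forall>c\<in>C. \<forall>b\<in>B. E c b \<longrightarrow> b \<in> C"
  shows "X_interval (X \<union> C) E X"
proof -
  have ch: "chordal (X \<union> B) E" and mX: "max_clique (X \<union> B) E X"
    using xi unfolding X_interval_def by (rule conjunct1, rule conjunct1[OF conjunct2])
  have "\<exists>Ks. distinct Ks \<and> set Ks = {K. max_clique (X \<union> B) E K} \<and> Ks \<noteq> [] \<and> last Ks = X \<and>
        (\<forall>v\<in>X \<union> B. \<forall>i j k. i \<le> j \<and> j \<le> k \<and> k < length Ks \<and> v \<in> Ks ! i \<and> v \<in> Ks ! k
              \<longrightarrow> v \<in> Ks ! j)"
    using xi unfolding X_interval_def by (rule conjunct2[OF conjunct2])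
  then obtain Ks where KsP: "distinct Ks \<and> set Ks = {K. max_clique (X \<union> B) E K} \<and> Ks \<noteq> [] \<and> last Ks = X \<and>
        (\<forall>v\<in>X \<union> B. \<forall>i j k. i \<le> j \<and> j \<le> k \<and> k < length Ks \<and> v \<in> Ks ! i \<and> v \<in> Ks ! k
              \<longrightarrow> v \<in> Ks ! j)" by (rule exE)
  note d = KsP[THEN conjunct1]
  note sK = KsP[THEN conjunct2, THEN conjunct1]
  note ne = KsP[THEN conjunct2, THEN conjunct2, THEN conjunct1]
  note lK = KsP[THEN conjunct2, THEN conjunct2, THEN conjunct2, THEN conjunct1]
  note cons = KsP[THEN conjunct2, THEN conjunct2, THEN conjunct2, THEN conjunct2]
  have XCB: "X \<union> C \<subseteq> X \<union> B" using CB by blast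
  have ic: "induced_cycle (X \<union> B) E cs" if "induced_cycle (X \<union> C) E cs" for cs
    using that CB unfolding induced_cycle_def by auto
  have chC: "chordal (X \<union> C) E"
    using ch ic unfolding chordal_def by blast
  have mX1: "is_clique (X \<union> B) E X" and mX2: "\<forall>K'. is_clique (X \<union> B) E K' \<and> X \<subseteq> K' \<longrightarrow> K' = X"
    using mX unfolding max_clique_def by (rule conjunct1, rule conjunct2)
  have Xcl: "is_clique (X \<union> C) E X" using mX1 by (rule clique_sub) simp
  have mXC: "max_clique (X \<union> C) E X"
    unfolding max_clique_def
  proof (intro conjI allI impI Xcl)
    fix K' assume h: "is_clique (X \<union> C) E K' \<and> X \<subseteq> K'"
    then have "is_clique (X \<union> B) E K'" using clique_mono XCB by blast
    then show "K' = X" using mX2 h by blast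
  qed
  have mc: "max_clique (X \<union> C) E K \<longleftrightarrow> max_clique (X \<union> B) E K \<and> K \<subseteq> X \<union> C" for K
  proof
    assume K: "max_clique (X \<union> C) E K"
    have Kc: "is_clique (X \<union> C) E K" using K unfolding max_clique_def by (rule conjunct1)
    have Km: "\<forall>K'. is_clique (X \<union> C) E K' \<and> K \<subseteq> K' \<longrightarrow> K' = K"
      using K unfolding max_clique_def by (rule conjunct2)
    have KB: "is_clique (X \<union> B) E K" using Kc XCB by (rule clique_mono)
    have KXC: "K \<subseteq> X \<union> C" using Kc by (simp add: is_clique_def)
    have Kmax: "K' = K" if K': "is_clique (X \<union> B) E K'" "K \<subseteq> K'" for K'
    proof (cases "K \<subseteq> X")
      case True
      then have "X = K" using Km Xcl by blast
      then show ?thesis using mX2 K' by blast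
    next
      case False
      then obtain c where c: "c \<in> K" "c \<notin> X" by blast
      with KXC have cC: "c \<in> C" by blast
      have "K' \<subseteq> X \<union> C"
      proof
        fix v assume v: "v \<in> K'"
        show "v \<in> X \<union> C"
        proof (cases "v = c")
          case True then show ?thesis using cC by simp
        next
          case False
          have "c \<in> K'" using c K' by blast
          have cv: "c \<noteq> v" using False by simp
          have cl': "\<forall>x\<in>K'. \<forall>y\<in>K'. x \<noteq> y \<longrightarrow> E x y" using K'(1) unfolding is_clique_def by (rule conjunct2)
          have "E c v" using cl' \<open>c \<in> K'\<close> v cv by blast
          moreover have "v \<in> X \<union> B" using K'(1) v unfolding is_clique_def by blast
          ultimately show ?thesis using cl cC by blast
        qed
      qed
      then have "is_clique (X \<union> C) E K'" using K'(1) by (rule clique_sub[rotated])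
      then show ?thesis using Km K' by blast
    qed
    have "max_clique (X \<union> B) E K"
      unfolding max_clique_def
    proof (intro conjI allI impI KB)
      fix K' assume "is_clique (X \<union> B) E K' \<and> K \<subseteq> K'"
      then show "K' = K" using Kmax by blast
    qed
    then show "max_clique (X \<union> B) E K \<and> K \<subseteq> X \<union> C" using KXC by blast
  next
    assume h: "max_clique (X \<union> B) E K \<and> K \<subseteq> X \<union> C"
    have hc: "is_clique (X \<union> B) E K" using h unfolding max_clique_def by blast
    have hm: "\<forall>K'. is_clique (X \<union> B) E K' \<and> K \<subseteq> K' \<longrightarrow> K' = K"
      using h unfolding max_clique_def by blast
    have KC: "is_clique (X \<union> C) E K" using hc h by (blast intro: clique_sub)
    show "max_clique (X \<union> C) E K"
      unfolding max_clique_def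
    proof (intro conjI allI impI KC)
      fix K' assume h2: "is_clique (X \<union> C) E K' \<and> K \<subseteq> K'"
      then have "is_clique (X \<union> B) E K'" using clique_mono XCB by blast
      then show "K' = K" using hm h2 by blast
    qed
  qed
  define Ks' where "Ks' = filter (\<lambda>K. K \<subseteq> X \<union> C) Ks"
  have d': "distinct Ks'" using d by (simp add: Ks'_def)
  have s': "set Ks' = {K. max_clique (X \<union> C) E K}"
    unfolding Ks'_def set_filter sK using mc by blast
  have l': "last Ks' = X" using last_filter'[of Ks "\<lambda>K. K \<subseteq> X \<union> C"] lK ne unfolding Ks'_def by simp
  have "X \<in> set Ks'" using s' mXC by simp
  hence ne': "Ks' \<noteq> []" by auto
  have "\<exists>f. (\<forall>i<length Ks'. f i < length Ks \<and> Ks' ! i = Ks ! f i) \<and>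
       (\<forall>i j. i \<le> j \<longrightarrow> j < length Ks' \<longrightarrow> f i \<le> f j)"
    unfolding Ks'_def by (rule filter_index)
  then obtain f where fP: "(\<forall>i<length Ks'. f i < length Ks \<and> Ks' ! i = Ks ! f i) \<and>
       (\<forall>i j. i \<le> j \<longrightarrow> j < length Ks' \<longrightarrow> f i \<le> f j)" by (rule exE)
  have f1: "\<And>i. i<length Ks' \<Longrightarrow> f i < length Ks \<and> Ks' ! i = Ks ! f i"
    using fP by blast
  have f2: "\<And>i j. i \<le> j \<Longrightarrow> j < length Ks' \<Longrightarrow> f i \<le> f j"
    using fP by blast
  have cons': "\<forall>v\<in>X \<union> C. \<forall>i j k. i \<le> j \<and> j \<le> k \<and> k < length Ks' \<and> v \<in> Ks' ! i \<and> v \<in> Ks' ! k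
              \<longrightarrow> v \<in> Ks' ! j"
  proof (intro ballI allI impI)
    fix v i j k assume v: "v \<in> X \<union> C" and h: "i \<le> j \<and> j \<le> k \<and> k < length Ks' \<and> v \<in> Ks' ! i \<and> v \<in> Ks' ! k"
    then have ij: "i \<le> j" and jk: "j \<le> k" and k: "k < length Ks'" and vi: "v \<in> Ks' ! i" and vk: "v \<in> Ks' ! k"
      by simp_all
    have jl: "j < length Ks'" using jk k by simp
    have il: "i < length Ks'" using ij jl by simp
    have a1: "f i \<le> f j" using f2[OF ij jl] .
    have a2: "f j \<le> f k" using f2[OF jk k] .
    have a3: "f k < length Ks" using f1[OF k] by simp
    have a4: "v \<in> Ks ! f i" using f1[OF il] vi by simp
    have a5: "v \<in> Ks ! f k" using f1[OF k] vk by simp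
    have vB: "v \<in> X \<union> B" using v CB by blast
    have "v \<in> Ks ! f j" using cons vB a1 a2 a3 a4 a5 by blast
    then show "v \<in> Ks' ! j" using f1[OF jl] by simp
  qed
  have "\<exists>Ks. distinct Ks \<and> set Ks = {K. max_clique (X \<union> C) E K} \<and> Ks \<noteq> [] \<and> last Ks = X \<and>
        (\<forall>v\<in>X \<union> C. \<forall>i j k. i \<le> j \<and> j \<le> k \<and> k < length Ks \<and> v \<in> Ks ! i \<and> v \<in> Ks ! k
              \<longrightarrow> v \<in> Ks ! j)"
    apply (rule exI[of _ Ks'])
    using d' s' ne' l' cons' by blast
  then show ?thesis unfolding X_interval_def
    using chC mXC by blast
qed

lemma minimal_anti: "minimal_in V E x W B \<Longrightarrow> A \<subseteq> B \<Longrightarrow> minimal_in V E x W A"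
  unfolding minimal_in_def by blast

lemma notmin_bound:
  assumes fin: "finite \<B>" and ref: "\<A> \<sqsubseteq> \<B>" and rem: "removable V E x W \<B>"
  shows "notmin V E x W \<A> = {} \<or> (\<exists>B\<in>\<B>. notmin V E x W \<A> \<subseteq> B)"
proof (cases "notmin V E x W \<A> = {}")
  case False
  then obtain A0 where A0: "A0 \<in> \<A>" "\<not> minimal_in V E x W A0" unfolding notmin_def by auto
  have "\<exists>B\<in>\<B>. A0 \<subseteq> B" using ref A0(1) unfolding refines_def by blast
  then obtain B0 where B0: "B0 \<in> \<B>" "A0 \<subseteq> B0" by blast
  have nB0: "\<not> minimal_in V E x W B0" using A0(2) minimal_anti[OF _ B0(2)] by blast
  have "A \<subseteq> B0" if A: "A \<in> \<A>" "\<not> minimal_in V E x W A" for A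
  proof -
    have "\<exists>B\<in>\<B>. A \<subseteq> B" using ref A(1) unfolding refines_def by blast
    then obtain B1 where B1: "B1 \<in> \<B>" "A \<subseteq> B1" by blast
    have nB1: "\<not> minimal_in V E x W B1" using A(2) minimal_anti[OF _ B1(2)] by blast
    have "B1 = B0"
    proof (rule ccontr)
      assume ne: "B1 \<noteq> B0"
      have "{B \<in> \<B>. minimal_in V E x W B} \<subseteq> \<B> - {B0, B1}" using nB0 nB1 by auto
      hence "card {B \<in> \<B>. minimal_in V E x W B} \<le> card (\<B> - {B0, B1})"
        using fin by (intro card_mono) auto
      also have "\<dots> = card \<B> - 2" using fin B0 B1 ne by (subst card_Diff_subset) auto
      finally have c1: "card {B \<in> \<B>. minimal_in V E x W B} \<le> card \<B> - 2" .
      have "card {B0, B1} \<le> card \<B>" using fin B0 B1 by (intro card_mono) auto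
      hence "card \<B> \<ge> 2" using ne by simp
      with c1 rem show False unfolding removable_def by linarith
    qed
    then show ?thesis using B1 by simp
  qed
  then show ?thesis using B0 unfolding notmin_def by blast
qed simp

definition closedA :: "'a set \<Rightarrow> ('a \<Rightarrow> 'a \<Rightarrow> bool) \<Rightarrow> 'a set \<Rightarrow> 'a set set \<Rightarrow> bool" where
  "closedA V E X \<A> \<longleftrightarrow> (\<forall>A\<in>\<A>. \<forall>u\<in>A. \<forall>v\<in>V - X. E u v \<longrightarrow> v \<in> A)"

lemma merge_ok:
  assumes ref: "\<A> \<sqsubseteq> \<B>" and M: "M = {} \<or> (\<exists>B\<in>\<B>. M \<subseteq> B)" and cl: "closedA V E X \<A>"
  shows "merge_blocks \<A> M \<sqsubseteq> \<B> \<and> closedA V E X (merge_blocks \<A> M)"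
proof (cases "{A \<in> \<A>. A \<subseteq> M} = {}")
  case True
  then have "merge_blocks \<A> M = \<A>" unfolding merge_blocks_def by simp
  then show ?thesis using ref cl by simp
next
  case False
  define S where "S = {A \<in> \<A>. A \<subseteq> M}"
  have mb: "merge_blocks \<A> M = (\<A> - S) \<union> {\<Union>S}" unfolding merge_blocks_def S_def by (rule if_not_P[OF False])
  from False obtain A0 where A0: "A0 \<in> \<A>" "A0 \<subseteq> M" by blast
  have refA: "\<And>A. A \<in> \<A> \<Longrightarrow> \<exists>B\<in>\<B>. A \<subseteq> B" using ref unfolding refines_def by blast
  have clA: "\<And>A u v. A \<in> \<A> \<Longrightarrow> u \<in> A \<Longrightarrow> v \<in> V - X \<Longrightarrow> E u v \<Longrightarrow> v \<in> A"
    using cl unfolding closedA_def by blast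
  have US: "\<Union>S \<subseteq> M" unfolding S_def by blast
  have U: "\<exists>B\<in>\<B>. \<Union>S \<subseteq> B"
  proof (cases "M = {}")
    case True
    obtain B where "B \<in> \<B>" using refA[OF A0(1)] by blast
    then show ?thesis using True US by blast
  next
    case False
    then obtain B where "B \<in> \<B>" "M \<subseteq> B" using M by blast
    then show ?thesis using US by blast
  qed
  have r: "\<exists>B\<in>\<B>. A \<subseteq> B" if "A \<in> merge_blocks \<A> M" for A
  proof -
    from that have "A \<in> \<A> \<or> A = \<Union>S" unfolding mb by blast
    then show ?thesis using refA U by blast
  qed
  have c: "v \<in> A" if h: "A \<in> merge_blocks \<A> M" "u \<in> A" "v \<in> V - X" "E u v" for A u v
  proof -
    from h(1) have "A \<in> \<A> \<or> A = \<Union>S" unfolding mb by blast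
    then show ?thesis
    proof
      assume "A \<in> \<A>" then show ?thesis using clA h by blast
    next
      assume AS: "A = \<Union>S"
      then obtain A' where A': "A' \<in> S" "u \<in> A'" using h(2) by blast
      then have "A' \<in> \<A>" unfolding S_def by blast
      then have "v \<in> A'" using clA A'(2) h(3,4) by blast
      then show ?thesis using AS A'(1) by blast
    qed
  qed
  show ?thesis unfolding refines_def closedA_def using r c by blast
qed

lemma CC_closed: "closedA V E X (CC (V - X) E)"
  unfolding closedA_def CC_def reach_def
  by (auto intro: rtranclp.rtrancl_into_rtrancl)

theorem lemma4:
  fixes V :: "'a set" and E :: "'a \<Rightarrow> 'a \<Rightarrow> bool"
  assumes "simple_graph V E"
    and "good_partition V E X \<B>"
    and "good_permutation V E X \<B> P"
  shows "\<forall>i\<in>{1..length P}. Aseq V E X P i \<sqsubseteq> \<B> \<and>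
           X_interval (X \<union> notmin V E (P ! (i - 1)) (set (drop (i - 1) P)) (Aseq V E X P (i - 1))) E X"
proof -
  have mX: "max_clique V E X" and part: "is_partition \<B> (V - X)" and ccB: "CC (V - X) E \<sqsubseteq> \<B>"
    and xiB: "\<forall>B\<in>\<B>. X_interval (X \<union> B) E X"
    using assms(2) unfolding good_partition_def by auto
  have dP: "distinct P" and sP: "set P = X" and remP: "\<forall>i<length P. removable V E (P ! i) (set (drop i P)) \<B>"
    using assms(3) unfolding good_permutation_def by auto
  have finV: "finite V" using assms(1) unfolding simple_graph_def by auto
  have UB: "\<Union>\<B> = V - X" using part unfolding is_partition_def by auto
  have finB: "finite \<B>"
  proof -
    have "\<B> \<subseteq> Pow (V - X)" using UB by auto
    then show ?thesis using finV by (meson finite_Diff finite_Pow_iff finite_subset)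
  qed
  have Y: "X - set (take i P) = set (drop i P)" for i
  proof -
    have "set P = set (take i P) \<union> set (drop i P)" by (metis append_take_drop_id set_append)
    moreover have "set (take i P) \<inter> set (drop i P) = {}"
      using dP by (metis append_take_drop_id distinct_append)
    ultimately show ?thesis using sP by blast
  qed
  have inv: "i \<le> length P \<Longrightarrow> Aseq V E X P i \<sqsubseteq> \<B> \<and> closedA V E X (Aseq V E X P i)" for i
  proof (induction i)
    case 0
    then show ?case using ccB CC_closed by simp
  next
    case (Suc i)
    then have IH: "Aseq V E X P i \<sqsubseteq> \<B>" "closedA V E X (Aseq V E X P i)" and il: "i < length P" by auto
    have "removable V E (P ! i) (X - set (take i P)) \<B>" using remP il Y by simp
    then have "notmin V E (P ! i) (X - set (take i P)) (Aseq V E X P i) = {} \<or>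
       (\<exists>B\<in>\<B>. notmin V E (P ! i) (X - set (take i P)) (Aseq V E X P i) \<subseteq> B)"
      using notmin_bound[OF finB IH(1)] by blast
    then show ?case using merge_ok[OF IH(1) _ IH(2)] by simp
  qed
  show ?thesis
  proof
    fix i assume i: "i \<in> {1..length P}"
    define k where "k = i - 1"
    have ik: "i = Suc k" "k < length P" using i by (auto simp: k_def)
    have A1: "Aseq V E X P i \<sqsubseteq> \<B>" using inv i by auto
    have IH: "Aseq V E X P k \<sqsubseteq> \<B>" "closedA V E X (Aseq V E X P k)" using inv ik by auto
    define M where "M = notmin V E (P ! k) (set (drop k P)) (Aseq V E X P k)"
    have "M = {} \<or> (\<exists>B\<in>\<B>. M \<subseteq> B)"
      unfolding M_def using notmin_bound[OF finB IH(1)] remP ik by blast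
    then have "X_interval (X \<union> M) E X"
    proof
      assume "M = {}"
      moreover have "is_clique V E X" using mX unfolding max_clique_def by auto
      ultimately show ?thesis using X_interval_clique by simp
    next
      assume "\<exists>B\<in>\<B>. M \<subseteq> B"
      then obtain B where B: "B \<in> \<B>" "M \<subseteq> B" by blast
      have "\<forall>c\<in>M. \<forall>b\<in>B. E c b \<longrightarrow> b \<in> M"
      proof (intro ballI impI)
        fix c b assume c: "c \<in> M" and b: "b \<in> B" and e: "E c b"
        have bV: "b \<in> V - X" using b B UB by auto
        from c obtain A where A: "A \<in> Aseq V E X P k" "c \<in> A" "A \<subseteq> M"
          unfolding M_def notmin_def by blast
        then have "b \<in> A" using IH(2) bV e unfolding closedA_def by blast
        then show "b \<in> M" using A by blast
      qed
      then show ?thesis using X_interval_restrict[OF _ B(2)] xiB B(1) by blast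
    qed
    then show "Aseq V E X P i \<sqsubseteq> \<B> \<and>
           X_interval (X \<union> notmin V E (P ! (i - 1)) (set (drop (i - 1) P)) (Aseq V E X P (i - 1))) E X"
      using A1 unfolding M_def k_def by simp
  qed
qed

end
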